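(* Let $\mathbf{T},\hat{\mathbf{T}}\in\mathbb{R}^{N\times N}$ be symmetric (the true and perturbed covariance wavelet operators), let $h_0,\dots,h_{J-1}$ be wavelet functions, let $\Delta\ge0$ satisfy $\|\mathbf{H}_j(\hat{\mathbf{T}})-\mathbf{H}_j(\mathbf{T})\|\le\Delta$ for all $j$, and let $B>0$ satisfy $\|\mathbf{H}_j(\mathbf{T})\|\le B$ and $\|\mathbf{H}_j(\hat{\mathbf{T}})\|\le B$ for all $j$. Let $\mathbf{x}_{(j_\ell,\dots,j_1)}$ and $\hat{\mathbf{x}}_{(j_\ell,\dots,j_1)}$ be the scattering features of $\mathbf{x}\in\mathbb{R}^N$ computed on $\mathbf{T}$ and $\hat{\mathbf{T}}$ respectively. Then for every $\ell\ge1$ and every tuple $(j_\ell,\dots,j_1)\in\{0,\dots,J-1\}^\ell$, $$\|\hat{\mathbf{x}}_{(j_\ell,\dots,j_1)}-\mathbf{x}_{(j_\ell,\dots,j_1)}\|\le\ell\,\Delta\,B^{\ell-1}\|\mathbf{x}\|.$$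
   Context: For a symmetric $\mathbf{M}=\mathbf{V}\boldsymbol\Lambda\mathbf{V}^\top$ with eigenvalues $\lambda_1,\dots,\lambda_N$, $\mathbf{H}_j(\mathbf{M})=\mathbf{V}\operatorname{diag}(h_j(\lambda_1),\dots,h_j(\lambda_N))\mathbf{V}^\top$. The nonlinearity $\rho:\mathbb{R}\to\mathbb{R}$ acts entrywise and is non-expansive: $|\rho(a)-\rho(b)|\le|a-b|$ and $\rho(0)=0$ (e.g. $\rho=|\cdot|$). Scattering features on $\mathbf{M}$: $\mathbf{x}_{()}=\mathbf{x}$ and $\mathbf{x}_{(j_\ell,\dots,j_1)}=\rho(\mathbf{H}_{j_\ell}(\mathbf{M})\mathbf{x}_{(j_{\ell-1},\dots,j_1)})$. Norms are Euclidean for vectors and spectral for matrices. *)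

theory Defs
  imports "HOL-Analysis.Analysis"
begin

definition diag_mat :: "real^'n \<Rightarrow> real^'n^'n" where
  "diag_mat d = (\<chi> i j. if i = j then d $ i else 0)"

definition eigdec :: "real^'n^'n \<Rightarrow> real^'n^'n \<Rightarrow> real^'n \<Rightarrow> bool" where
  "eigdec M V lam \<longleftrightarrow> orthogonal_matrix V \<and> M = V ** diag_mat lam ** transpose V"

text \<open>Spectral matrix function H(M) = V diag(h(lambda_1),...,h(lambda_N)) V^T,
  using a chosen eigendecomposition (the result is independent of the choice).\<close>
definition mat_fun :: "(real \<Rightarrow> real) \<Rightarrow> real^'n^'n \<Rightarrow> real^'n^'n" where
  "mat_fun h M = (let (V, lam) = (SOME p. eigdec M (fst p) (snd p))
                  in V ** diag_mat (\<chi> i. h (lam $ i)) ** transpose V)"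

definition spec_norm :: "real^'n^'n \<Rightarrow> real" where
  "spec_norm A = onorm (\<lambda>x. A *v x)"

text \<open>Scattering features: the list [j_l, ..., j_1] (head is the last wavelet applied).\<close>
fun scat :: "(nat \<Rightarrow> real \<Rightarrow> real) \<Rightarrow> (real \<Rightarrow> real) \<Rightarrow> real^'n^'n \<Rightarrow> nat list \<Rightarrow> real^'n \<Rightarrow> real^'n" where
  "scat h \<rho> M [] x = x"
| "scat h \<rho> M (j # js) x = (\<chi> i. \<rho> ((mat_fun (h j) M *v scat h \<rho> M js x) $ i))"

end

theory Submission
  imports Defs
begin

lemma spec_norm_bound: "norm (A *v x) \<le> spec_norm A * norm (x::real^'n)"
  unfolding spec_norm_def
  by (rule onorm) (rule matrix_vector_mul_bounded_linear)

lemma rho_map: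
  assumes "\<And>a b. \<bar>\<rho> a - \<rho> b\<bar> \<le> \<bar>a - b\<bar>"
  shows "norm ((\<chi> i. \<rho> (v $ i)) - (\<chi> i. \<rho> (w $ i))) \<le> norm (v - (w::real^'n))"
  by (rule norm_le_componentwise_cart) (simp add: assms)

lemma rho_map0:
  assumes "\<And>a b. \<bar>\<rho> a - \<rho> b\<bar> \<le> \<bar>a - b\<bar>" "\<rho> 0 = 0"
  shows "norm ((\<chi> i. \<rho> (v $ i))) \<le> norm (v::real^'n)"
proof (rule norm_le_componentwise_cart)
  fix i
  have "\<bar>\<rho> (v $ i) - \<rho> 0\<bar> \<le> \<bar>v $ i - 0\<bar>" by (rule assms(1))
  then show "norm ((\<chi> i. \<rho> (v $ i)) $ i) \<le> norm (v $ i)" using assms(2) by simp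
qed

lemma scat_bound:
  assumes "\<And>a b. \<bar>\<rho> a - \<rho> b\<bar> \<le> \<bar>a - b\<bar>" "\<rho> 0 = 0" "B \<ge> 0"
    and "\<And>j. j < J \<Longrightarrow> spec_norm (mat_fun (h j) M) \<le> B"
    and "set js \<subseteq> {..<J}"
  shows "norm (scat h \<rho> M js x) \<le> B ^ length js * norm x"
  using assms(5)
proof (induction js)
  case Nil then show ?case by simp
next
  case (Cons j js)
  have "norm (scat h \<rho> M (j#js) x) \<le> norm (mat_fun (h j) M *v scat h \<rho> M js x)"
    by (simp add: rho_map0[OF assms(1,2)])
  also have "\<dots> \<le> spec_norm (mat_fun (h j) M) * norm (scat h \<rho> M js x)"
    by (rule spec_norm_bound)
  also have "\<dots> \<le> B * (B ^ length js * norm x)"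
  proof (rule mult_mono)
    show "spec_norm (mat_fun (h j) M) \<le> B" using Cons.prems assms(4) by simp
    show "norm (scat h \<rho> M js x) \<le> B ^ length js * norm x" using Cons by simp
  qed (use assms(3) in simp_all)
  finally show ?case by (simp add: mult.assoc)
qed

theorem lemma3:
  fixes T That :: "real^'n^'n" and h :: "nat \<Rightarrow> real \<Rightarrow> real" and J :: nat
    and \<rho> :: "real \<Rightarrow> real" and \<Delta> B :: real and x :: "real^'n" and js :: "nat list"
  assumes "transpose T = T" and "transpose That = That"
    and "\<And>a b. \<bar>\<rho> a - \<rho> b\<bar> \<le> \<bar>a - b\<bar>" and "\<rho> 0 = 0"
    and "\<Delta> \<ge> 0"
    and "\<And>j. j < J \<Longrightarrow> spec_norm (mat_fun (h j) That - mat_fun (h j) T) \<le> \<Delta>"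
    and "B > 0"
    and "\<And>j. j < J \<Longrightarrow> spec_norm (mat_fun (h j) T) \<le> B"
    and "\<And>j. j < J \<Longrightarrow> spec_norm (mat_fun (h j) That) \<le> B"
    and "length js \<ge> 1" and "set js \<subseteq> {..<J}"
  shows "norm (scat h \<rho> That js x - scat h \<rho> T js x)
           \<le> real (length js) * \<Delta> * B ^ (length js - 1) * norm x"
proof -
  have "norm (scat h \<rho> That js x - scat h \<rho> T js x)
           \<le> real (length js) * \<Delta> * B ^ (length js - 1) * norm x"
    using assms(11)
  proof (induction js)
    case Nil then show ?case by simp
  next
    case (Cons j js)
    let ?A = "mat_fun (h j) T" and ?Ah = "mat_fun (h j) That"
    let ?u = "scat h \<rho> That js x" and ?v = "scat h \<rho> T js x"
    let ?k = "length js"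
    have abc: "\<And>a b c::real^'n. a - c = (a - b) + (b - c)" by simp
    have j: "j < J" and s: "set js \<subseteq> {..<J}" using Cons.prems by auto
    have IH: "norm (?u - ?v) \<le> real ?k * \<Delta> * B ^ (?k - 1) * norm x" using Cons.IH[OF s] .
    have ub: "norm ?u \<le> B ^ ?k * norm x"
      using scat_bound[OF assms(3,4) less_imp_le[OF assms(7)] assms(9) s] .
    have "norm (scat h \<rho> That (j#js) x - scat h \<rho> T (j#js) x) \<le> norm (?Ah *v ?u - ?A *v ?v)"
      unfolding scat.simps by (rule rho_map[OF assms(3)])
    also have "?Ah *v ?u - ?A *v ?v = (?Ah - ?A) *v ?u + ?A *v (?u - ?v)"
      unfolding matrix_vector_mult_diff_rdistrib matrix_vector_mult_diff_distrib
      by (rule abc)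
    also have "norm \<dots> \<le> norm ((?Ah - ?A) *v ?u) + norm (?A *v (?u - ?v))"
      by (rule norm_triangle_ineq)
    also have "\<dots> \<le> \<Delta> * (B ^ ?k * norm x) + B * (real ?k * \<Delta> * B ^ (?k - 1) * norm x)"
    proof (rule add_mono)
      show "norm ((?Ah - ?A) *v ?u) \<le> \<Delta> * (B ^ ?k * norm x)"
        using spec_norm_bound[of "?Ah - ?A" ?u] mult_mono[OF assms(6)[OF j] ub assms(5) norm_ge_zero]
        by (rule order_trans)
      show "norm (?A *v (?u - ?v)) \<le> B * (real ?k * \<Delta> * B ^ (?k - 1) * norm x)"
        using spec_norm_bound[of ?A "?u - ?v"] mult_mono[OF assms(8)[OF j] IH less_imp_le[OF assms(7)] norm_ge_zero]
        by (rule order_trans)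
    qed
    also have "\<dots> = real (length (j#js)) * \<Delta> * B ^ (length (j#js) - 1) * norm x"
    proof (cases ?k)
      case 0 then show ?thesis by simp
    next
      case (Suc m)
      have "B * (real (Suc m) * \<Delta> * B ^ m * norm x) = real (Suc m) * \<Delta> * B ^ Suc m * norm x"
        by (simp only: power_Suc mult_ac)
      moreover have "length (j#js) = Suc (Suc m)" using Suc by simp
      ultimately show ?thesis using Suc by (simp add: algebra_simps)
    qed
    finally show ?case .
  qed
  then show ?thesis .
qed

end
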